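(* Let $\Sigma$ be a subshift and let $\mathcal G$ be a proper subset of $\mathcal L(\Sigma)$ containing the empty word. If $\mathcal G$ has (W')-specification with gap size $t$, then $\mathcal G$ has (W)-specification with gap size $t$.
   Context: $\Sigma\subset\{0,\ldots,m-1\}^{\mathbb N}$ or $\{0,\ldots,m-1\}^{\mathbb Z}$ is a closed shift-invariant set; $\mathcal L(\Sigma)$ is the set of the empty word $\emptyset$ (with $\emptyset w=w\emptyset=w$, $|\emptyset|=0$) and all finite words appearing in elements of $\Sigma$. (W)-specification: a proper subset $\mathcal G\subset\mathcal L(\Sigma)$ has (W)-specification with gap size $t\geq0$ if for every integer $k\geq2$ and all $v^1,\ldots,v^k\in\mathcal G$ there are $w^1,\ldots,w^{k-1}\in\mathcal L(\Sigma)$ with $|w^i|\leq t$ and $v^1w^1v^2w^2\cdots w^{k-1}v^k\in\mathcal L(\Sigma)$. (W')-specification: a subset $\mathcal G\subset\mathcal L(\Sigma)$ containing the empty word has (W')-specification with gap size $t\ge0$ if for all integers $j,k\geq2$, all $v^1,\ldots,v^{j+k}\in\mathcal G$ and all $w^1,\ldots,w^{j+k-1}\in\mathcal L(\Sigma)$ with $|w^i|\leq t$ such that $u:=v^1w^1v^2\cdots w^{j-1}v^j\in\mathcal L(\Sigma)$ and $v:=v^{j+1}w^{j+1}\cdots w^{j+k-1}v^{j+k}\in\mathcal L(\Sigma)$, there is $w\in\mathcal L(\Sigma)$ with $|w|\leq t$ and $uwv\in\mathcal L(\Sigma)$. *)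

theory Defs
  imports "HOL-Analysis.Analysis"
begin

text \<open>Points of the full shift are functions nat => nat (one-sided) or int => nat (two-sided),
  topologised with the product topology (discrete factors).\<close>

definition subshiftN :: "nat \<Rightarrow> (nat \<Rightarrow> nat) set \<Rightarrow> bool" where
  "subshiftN m S \<longleftrightarrow> (\<forall>x\<in>S. \<forall>k. x k < m) \<and> closed S \<and> (\<lambda>x. x \<circ> Suc) ` S \<subseteq> S"

definition subshiftZ :: "nat \<Rightarrow> (int \<Rightarrow> nat) set \<Rightarrow> bool" where
  "subshiftZ m S \<longleftrightarrow> (\<forall>x\<in>S. \<forall>k. x k < m) \<and> closed S \<and> (\<lambda>x. (\<lambda>k. x (k + 1))) ` S = S"

definition langN :: "(nat \<Rightarrow> nat) set \<Rightarrow> nat list set" where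
  "langN S = insert [] {map (\<lambda>k. x (i + k)) [0..<n] | x i n. x \<in> S}"

definition langZ :: "(int \<Rightarrow> nat) set \<Rightarrow> nat list set" where
  "langZ S = insert [] {map (\<lambda>k. x (i + int k)) [0..<n] | x i n. x \<in> S}"

definition subshift_language :: "nat \<Rightarrow> nat list set \<Rightarrow> bool" where
  "subshift_language m L \<longleftrightarrow>
     (\<exists>S. subshiftN m S \<and> L = langN S) \<or> (\<exists>S. subshiftZ m S \<and> L = langZ S)"

text \<open>Interleaving: v(a) w(a) v(a+1) w(a+1) ... w(a+n-2) v(a+n-1), for n >= 1.\<close>
definition interleave :: "(nat \<Rightarrow> 'a list) \<Rightarrow> (nat \<Rightarrow> 'a list) \<Rightarrow> nat \<Rightarrow> nat \<Rightarrow> 'a list" where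
  "interleave v w a n = concat (map (\<lambda>i. v (a + i) @ w (a + i)) [0..<n - 1]) @ v (a + n - 1)"

definition W_spec :: "'a list set \<Rightarrow> 'a list set \<Rightarrow> nat \<Rightarrow> bool" where
  "W_spec L G t \<longleftrightarrow> G \<subset> L \<and>
     (\<forall>k \<ge> 2. \<forall>v. (\<forall>i<k. v i \<in> G) \<longrightarrow>
        (\<exists>w. (\<forall>i<k - 1. w i \<in> L \<and> length (w i) \<le> t) \<and> interleave v w 0 k \<in> L))"

definition W'_spec :: "'a list set \<Rightarrow> 'a list set \<Rightarrow> nat \<Rightarrow> bool" where
  "W'_spec L G t \<longleftrightarrow> G \<subseteq> L \<and> [] \<in> G \<and>
     (\<forall>j \<ge> 2. \<forall>k \<ge> 2. \<forall>v w.
        (\<forall>i<j + k. v i \<in> G) \<longrightarrow> (\<forall>i<j + k - 1. w i \<in> L \<and> length (w i) \<le> t) \<longrightarrow>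
        interleave v w 0 j \<in> L \<longrightarrow> interleave v w j k \<in> L \<longrightarrow>
        (\<exists>u. u \<in> L \<and> length u \<le> t \<and> interleave v w 0 j @ u @ interleave v w j k \<in> L))"

end

theory Submission
  imports Defs
begin

lemma interleave_cong:
  assumes "n \<ge> 1" "\<And>i. i < n \<Longrightarrow> v (a+i) = v' (a+i)"
    "\<And>i. i < n - 1 \<Longrightarrow> w (a+i) = w' (a+i)"
  shows "interleave v w a n = interleave v' w' a n"
proof -
  have "map (\<lambda>i. v (a + i) @ w (a + i)) [0..<n - 1] = map (\<lambda>i. v' (a + i) @ w' (a + i)) [0..<n - 1]"
    using assms by (intro map_cong) auto
  moreover have "v (a + n - 1) = v' (a + n - 1)" using assms(1) assms(2)[of "n-1"] by simp
  ultimately show ?thesis unfolding interleave_def by (metis (no_types, lifting))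
qed

lemma interleave_Suc:
  assumes "n \<ge> 1"
  shows "interleave v w 0 (Suc n) = interleave v w 0 n @ w (n-1) @ v n"
proof -
  have "[0..<n] = [0..<n-1] @ [n-1]" using assms
    by (metis Suc_diff_1 less_eq_Suc_le upt_Suc_append zero_le zero_less_iff_neq_zero bot_nat_0.extremum_uniqueI not_one_le_zero upt_Suc)
  then show ?thesis using assms unfolding interleave_def by simp
qed

lemma interleave_1: "interleave v w a 1 = v a"
  unfolding interleave_def by simp

lemma interleave_2: "interleave v w a 2 = v a @ w a @ v (a+1)"
  unfolding interleave_def by (simp add: numeral_2_eq_2)

lemma main:
  assumes W': "W'_spec L G t" and k: "k \<ge> 1"
  shows "\<forall>v. (\<forall>i<k. v i \<in> G) \<longrightarrow>
        (\<exists>w. (\<forall>i<k - 1. w i \<in> L \<and> length (w i) \<le> t) \<and> interleave v w 0 k \<in> L)"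
  using k
proof (induction k rule: dec_induct)
  case base
  have GL: "G \<subseteq> L" using W' unfolding W'_spec_def by blast
  show ?case using GL by (auto simp: interleave_1 simp del: One_nat_def)
next
  case (step k)
  have GL: "G \<subseteq> L" and e: "[] \<in> G" using W' unfolding W'_spec_def by blast+
  have eL: "[] \<in> L" using GL e by blast
  show ?case
  proof (intro allI impI)
    fix v assume v: "\<forall>i<Suc k. v i \<in> G"
    obtain w where w: "\<forall>i<k - 1. w i \<in> L \<and> length (w i) \<le> t" and wL: "interleave v w 0 k \<in> L"
      using step.IH v less_SucI by blast
    define v' where "v' i = (if i < k then v i else if i = k+2 then v k else [])" for i
    define w' where "w' i = (if i < k - 1 then w i else [])" for i
    have v'G: "\<forall>i<(k+1) + 2. v' i \<in> G" using v e unfolding v'_def by auto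
    have w'L: "\<forall>i<(k+1) + 2 - 1. w' i \<in> L \<and> length (w' i) \<le> t" using w eL unfolding w'_def by auto
    have eq1: "interleave v' w' 0 (k+1) = interleave v w 0 k"
    proof -
      have "interleave v' w' 0 (k+1) = interleave v' w' 0 k @ w' (k-1) @ v' k"
        using interleave_Suc[OF step.hyps(1)] by simp
      also have "interleave v' w' 0 k = interleave v w 0 k"
        using step.hyps(1) by (intro interleave_cong) (auto simp: v'_def w'_def)
      moreover have "w' (k-1) = []" "v' k = []" by (simp_all add: v'_def w'_def)
      ultimately show ?thesis by simp
    qed
    have eq2: "interleave v' w' (k+1) 2 = v k"
      by (auto simp: interleave_2 v'_def w'_def)
    have A: "interleave v' w' 0 (k+1) \<in> L" using eq1 wL by simp
    have B: "interleave v' w' (k+1) 2 \<in> L" using eq2 v GL by auto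
    have "k + 1 \<ge> 2" using step.hyps(1) by simp
    then obtain u where u: "u \<in> L" "length u \<le> t"
      and uL: "interleave v' w' 0 (k+1) @ u @ interleave v' w' (k+1) 2 \<in> L"
      using W' v'G w'L A B unfolding W'_spec_def by blast
    define w'' where "w'' i = (if i < k - 1 then w i else u)" for i
    have "interleave v w'' 0 (Suc k) = interleave v w'' 0 k @ u @ v k"
      using interleave_Suc[OF step.hyps(1), of v w''] by (simp add: w''_def)
    also have "interleave v w'' 0 k = interleave v w 0 k"
      using step.hyps(1) by (intro interleave_cong) (auto simp: w''_def)
    finally have "interleave v w'' 0 (Suc k) \<in> L" using uL eq1 eq2 by simp
    moreover have "\<forall>i<Suc k - 1. w'' i \<in> L \<and> length (w'' i) \<le> t"
      using w u unfolding w''_def by auto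
    ultimately show "\<exists>w. (\<forall>i<Suc k - 1. w i \<in> L \<and> length (w i) \<le> t) \<and> interleave v w 0 (Suc k) \<in> L"
      by blast
  qed
qed

theorem lemma2p3:
  fixes m t :: nat and L G :: "nat list set"
  assumes "subshift_language m L"
    and "G \<subset> L" and "[] \<in> G"
    and "W'_spec L G t"
  shows "W_spec L G t"
  unfolding W_spec_def using assms(2) main[OF assms(4)] by auto

end
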